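(* Let $S$ be a monoid. Any two trivial left $S$-acts, each of cardinality greater than one, are geometrically equivalent (in the variety of all left $S$-acts).
   Context: A left $S$-act is a nonempty set with an action $S\times A\to A$ satisfying $1a=a$, $(st)a=s(ta)$; homomorphisms preserve the action. An $S$-act $A$ is trivial if $sa=a$ for all $s\in S$, $a\in A$. For a nonempty finite set $X$, $F_X=\coprod_{x\in X}S_x$ is the free $S$-act on $X$. For an $S$-act $G$ and a relation $T\subseteq F_X\times F_X$, $T'_G=\{\mu:F_X\to G \text{ homomorphism}: T\subseteq\ker\mu\}$ and $T''_G=\bigcap_{\mu\in T'_G}\ker\mu$ (empty intersection $=F_X\times F_X$). $S$-acts $G_1,G_2$ are geometrically equivalent iff $T''_{G_1}=T''_{G_2}$ for all nonempty finite $X$ and all $T\subseteq F_X\times F_X$. *)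

theory Defs
  imports Main
begin

definition is_act :: "'b set \<Rightarrow> ('s::monoid_mult \<Rightarrow> 'b \<Rightarrow> 'b) \<Rightarrow> bool" where
  "is_act A act \<longleftrightarrow> A \<noteq> {} \<and> (\<forall>s. \<forall>a\<in>A. act s a \<in> A) \<and>
     (\<forall>a\<in>A. act 1 a = a) \<and> (\<forall>s t. \<forall>a\<in>A. act (s * t) a = act s (act t a))"

definition trivial_act :: "'b set \<Rightarrow> ('s::monoid_mult \<Rightarrow> 'b \<Rightarrow> 'b) \<Rightarrow> bool" where
  "trivial_act A act \<longleftrightarrow> (\<forall>s. \<forall>a\<in>A. act s a = a)"

text \<open>Free act on X: the coproduct of copies S_x of S, realised as X \<times> S with
action t\<cdot>(x,s) = (x, t*s).\<close>

definition free_carrier :: "'x set \<Rightarrow> ('x \<times> 's) set" where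
  "free_carrier X = X \<times> UNIV"

definition free_act :: "'s::monoid_mult \<Rightarrow> ('x \<times> 's) \<Rightarrow> ('x \<times> 's)" where
  "free_act t p = (fst p, t * snd p)"

definition act_hom ::
  "'a set \<Rightarrow> ('s::monoid_mult \<Rightarrow> 'a \<Rightarrow> 'a) \<Rightarrow> 'b set \<Rightarrow> ('s \<Rightarrow> 'b \<Rightarrow> 'b) \<Rightarrow> ('a \<Rightarrow> 'b) \<Rightarrow> bool" where
  "act_hom A actA B actB f \<longleftrightarrow> (\<forall>a\<in>A. f a \<in> B) \<and> (\<forall>s. \<forall>a\<in>A. f (actA s a) = actB s (f a))"

definition hom_ker :: "'a set \<Rightarrow> ('a \<Rightarrow> 'b) \<Rightarrow> ('a \<times> 'a) set" where
  "hom_ker A f = {(p, q). p \<in> A \<and> q \<in> A \<and> f p = f q}"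

definition T_prime ::
  "'x set \<Rightarrow> (('x \<times> 's) \<times> ('x \<times> 's)) set \<Rightarrow> 'b set \<Rightarrow> ('s::monoid_mult \<Rightarrow> 'b \<Rightarrow> 'b)
    \<Rightarrow> (('x \<times> 's) \<Rightarrow> 'b) set" where
  "T_prime X T G actG = {\<mu>. act_hom (free_carrier X) free_act G actG \<mu> \<and> T \<subseteq> hom_ker (free_carrier X) \<mu>}"

text \<open>T''_G : intersection of kernels; the empty intersection is F_X \<times> F_X.\<close>
definition T_dprime ::
  "'x set \<Rightarrow> (('x \<times> 's) \<times> ('x \<times> 's)) set \<Rightarrow> 'b set \<Rightarrow> ('s::monoid_mult \<Rightarrow> 'b \<Rightarrow> 'b)
    \<Rightarrow> (('x \<times> 's) \<times> ('x \<times> 's)) set" where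
  "T_dprime X T G actG = (free_carrier X \<times> free_carrier X) \<inter>
     (\<Inter>\<mu>\<in>T_prime X T G actG. hom_ker (free_carrier X) \<mu>)"

text \<open>Geometric equivalence; finite sets X of variables are taken as finite
sets of natural numbers (every finite set is in bijection with one).\<close>
definition geom_equiv ::
  "'b set \<Rightarrow> ('s::monoid_mult \<Rightarrow> 'b \<Rightarrow> 'b) \<Rightarrow> 'c set \<Rightarrow> ('s \<Rightarrow> 'c \<Rightarrow> 'c) \<Rightarrow> bool" where
  "geom_equiv G1 act1 G2 act2 \<longleftrightarrow>
     (\<forall>X :: nat set. finite X \<and> X \<noteq> {} \<longrightarrow>
        (\<forall>T. T \<subseteq> free_carrier X \<times> free_carrier X \<longrightarrow>
           T_dprime X T G1 act1 = T_dprime X T G2 act2))"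

end

theory Submission
  imports Defs
begin

definition relE :: "(('x \<times> 's) \<times> ('x \<times> 's)) set \<Rightarrow> ('x \<times> 'x) set" where
  "relE T = (let R = (\<lambda>(p,q). (fst p, fst q)) ` T in (R \<union> R\<inverse>)\<^sup>*)"

lemma relE_trans: "(a,b) \<in> relE T \<Longrightarrow> (b,c) \<in> relE T \<Longrightarrow> (a,c) \<in> relE T"
  unfolding relE_def Let_def by (rule rtrancl_trans)

lemma hom_const:
  assumes tr: "trivial_act G act" and h: "act_hom (free_carrier X) free_act G act \<mu>"
    and x: "x \<in> X"
  shows "\<mu> (x, s) = \<mu> (x, 1)"
proof -
  have "\<mu> (free_act s (x,1)) = act s (\<mu> (x,1))"
    using h x unfolding act_hom_def free_carrier_def by blast
  moreover have "\<mu> (x,1) \<in> G" using h x unfolding act_hom_def free_carrier_def by blast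
  ultimately show ?thesis using tr unfolding trivial_act_def free_act_def by simp
qed

lemma char:
  fixes act :: "'s::monoid_mult \<Rightarrow> 'b \<Rightarrow> 'b" and T :: "(('x \<times> 's) \<times> ('x \<times> 's)) set"
  assumes tr: "trivial_act G act" and two: "\<exists>a\<in>G. \<exists>b\<in>G. a \<noteq> b"
    and T: "T \<subseteq> free_carrier X \<times> free_carrier X"
  shows "T_dprime X T G act = {(p,q). p \<in> free_carrier X \<and> q \<in> free_carrier X \<and> (fst p, fst q) \<in> relE T}"
proof (intro set_eqI iffI)
  fix pq assume A: "pq \<in> T_dprime X T G act"
  obtain p q where pq: "pq = (p,q)" by (cases pq)
  have pF: "p \<in> free_carrier X" and qF: "q \<in> free_carrier X" using A pq unfolding T_dprime_def by auto
  obtain a b where ab: "a \<in> G" "b \<in> G" "a \<noteq> b" using two by blast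
  show "pq \<in> {(p,q). p \<in> free_carrier X \<and> q \<in> free_carrier X \<and> (fst p, fst q) \<in> relE T}"
  proof (rule ccontr)
    assume nE: "pq \<notin> {(p,q). p \<in> free_carrier X \<and> q \<in> free_carrier X \<and> (fst p, fst q) \<in> relE T}"
    hence nE': "(fst p, fst q) \<notin> relE T" using pF qF pq by auto
    define \<mu> where "\<mu> = (\<lambda>r::('x \<times> 's). if (fst p, fst r) \<in> relE T then a else b)"
    have hom: "act_hom (free_carrier X) free_act G act \<mu>"
      unfolding act_hom_def using ab tr unfolding trivial_act_def \<mu>_def free_act_def by auto
    have ker: "T \<subseteq> hom_ker (free_carrier X) \<mu>"
    proof
      fix t assume t: "t \<in> T"
      obtain p' q' where t': "t = (p',q')" by (cases t)
      have r: "(fst p', fst q') \<in> (\<lambda>(p,q). (fst p, fst q)) ` T" using t t' by force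
      have e1: "(fst p', fst q') \<in> relE T"
        unfolding relE_def Let_def by (intro r_into_rtrancl UnI1 r)
      have e2: "(fst q', fst p') \<in> relE T"
        unfolding relE_def Let_def by (intro r_into_rtrancl UnI2 converseI r)
      have "(fst p, fst p') \<in> relE T \<longleftrightarrow> (fst p, fst q') \<in> relE T"
        using relE_trans[OF _ e1, of "fst p"] relE_trans[OF _ e2, of "fst p"] by blast
      hence m: "\<mu> p' = \<mu> q'" unfolding \<mu>_def by simp
      have "p' \<in> free_carrier X" "q' \<in> free_carrier X" using t t' T by auto
      thus "t \<in> hom_ker (free_carrier X) \<mu>"
        using m t' unfolding hom_ker_def by simp
    qed
    have "\<mu> \<in> T_prime X T G act" using hom ker unfolding T_prime_def by auto
    hence "\<mu> p = \<mu> q" using A pq unfolding T_dprime_def hom_ker_def by auto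
    moreover have "\<mu> p = a" unfolding \<mu>_def relE_def by simp
    moreover have "\<mu> q = b" using nE' unfolding \<mu>_def by simp
    ultimately show False using ab by simp
  qed
next
  fix pq :: "('x \<times> 's) \<times> ('x \<times> 's)" assume A: "pq \<in> {(p,q). p \<in> free_carrier X \<and> q \<in> free_carrier X \<and> (fst p, fst q) \<in> relE T}"
  obtain p q where pq: "pq = (p,q)" by (cases pq)
  have pF: "p \<in> free_carrier X" and qF: "q \<in> free_carrier X" and E: "(fst p, fst q) \<in> relE T"
    using A pq by auto
  have "pq \<in> hom_ker (free_carrier X) \<mu>" if mu: "\<mu> \<in> T_prime X T G act" for \<mu>
  proof -
    have h: "act_hom (free_carrier X) free_act G act \<mu>" and k: "T \<subseteq> hom_ker (free_carrier X) \<mu>"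
      using mu unfolding T_prime_def by auto
    have c: "\<mu> r = \<mu> (fst r, 1)" if "r \<in> free_carrier X" for r
      using hom_const[OF tr h, of "fst r" "snd r"] that unfolding free_carrier_def by auto
    let ?R = "(\<lambda>(p,q). (fst p, fst q)) ` T"
    have stp: "\<mu> (z, 1) = \<mu> (w, 1)" if "(z,w) \<in> ?R \<union> ?R\<inverse>" for z w
    proof -
      from that obtain p' q' where t: "(p',q') \<in> T" and
        zw: "(z = fst p' \<and> w = fst q') \<or> (w = fst p' \<and> z = fst q')" by auto
      have "p' \<in> free_carrier X" "q' \<in> free_carrier X" "\<mu> p' = \<mu> q'"
        using t k unfolding hom_ker_def by auto
      hence "\<mu> (fst p', 1) = \<mu> (fst q', 1)" using c by metis
      thus ?thesis using zw by auto
    qed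
    have ind: "(x,y) \<in> (?R \<union> ?R\<inverse>)\<^sup>* \<Longrightarrow> \<mu> (x,1) = \<mu> (y,1)" for x y
    proof (induction rule: rtrancl_induct)
      case base then show ?case by simp
    next
      case (step y z)
      have "\<mu> (y, 1) = \<mu> (z, 1)" by (rule stp[OF step(2)])
      with step(3) show ?case by simp
    qed
    have "(fst p, fst q) \<in> (?R \<union> ?R\<inverse>)\<^sup>*" using E unfolding relE_def Let_def by simp
    hence "\<mu> (fst p, 1) = \<mu> (fst q, 1)" by (rule ind)
    thus ?thesis using c pF qF pq unfolding hom_ker_def by auto
  qed
  thus "pq \<in> T_dprime X T G act" using pF qF pq unfolding T_dprime_def by auto
qed

theorem corollary3p8:
  fixes G1 :: "'b set" and act1 :: "'s::monoid_mult \<Rightarrow> 'b \<Rightarrow> 'b"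
    and G2 :: "'c set" and act2 :: "'s \<Rightarrow> 'c \<Rightarrow> 'c"
  assumes "is_act G1 act1" and "trivial_act G1 act1" and "\<exists>a\<in>G1. \<exists>b\<in>G1. a \<noteq> b"
    and "is_act G2 act2" and "trivial_act G2 act2" and "\<exists>a\<in>G2. \<exists>b\<in>G2. a \<noteq> b"
  shows "geom_equiv G1 act1 G2 act2"
  unfolding geom_equiv_def
proof (intro allI impI)
  fix X :: "nat set" and T :: "((nat \<times> 's) \<times> (nat \<times> 's)) set" assume TT: "T \<subseteq> free_carrier X \<times> free_carrier X"
  show "T_dprime X T G1 act1 = T_dprime X T G2 act2"
    unfolding char[OF assms(2,3) TT] char[OF assms(5,6) TT] by (rule refl)
qed

end
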